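(* Let $(\mathscr{D},b)$ be a finite bilinear form with $(\mathscr{D},b)\cong(\mathscr{D},-b)$, and let $\sigma\in\{0,4\}$. Then there exists exactly one equivalence class $\{\hat q\}$ of quadratic $\mathsf{T}$-refinements of $b$ such that $\tau_1(\hat q)/|\tau_1(\hat q)|=e^{2\pi i\sigma/8}$, where $\tau_1(\hat q)=\sum_{x\in\mathscr{D}}e^{2\pi i\hat q(x)}$.
   Context: A finite bilinear form $(\mathscr{D},b)$ is a finite abelian group $\mathscr{D}$ with a symmetric, bilinear, non-degenerate map $b:\mathscr{D}\times\mathscr{D}\to\mathbb{Q}/\mathbb{Z}$; $(\mathscr{D},b)\cong(\mathscr{D},-b)$ means there is a group automorphism $f$ of $\mathscr{D}$ with $b(f(x),f(y))=-b(x,y)$. A quadratic refinement of $b$ is a function $\hat q:\mathscr{D}\to\mathbb{Q}/\mathbb{Z}$ with $\hat q(x+y)-\hat q(x)-\hat q(y)+\hat q(0)=b(x,y)$ for all $x,y\in\mathscr{D}$. Two quadratic refinements $\hat q,\hat q'$ on $\mathscr{D}$ are equivalent if there is $\delta\in\mathscr{D}$ with $\hat q(x)=\hat q'(x+\delta)$ for all $x$; the equivalence class is denoted $\{\hat q\}$ (the Gauss sum $\tau_1$ depends only on the class). A quadratic refinement $\hat q$ is a $\mathsf{T}$-refinement if there is a group automorphism $\gamma$ of $\mathscr{D}$ with $\{\hat q\circ\gamma\}=\{-\hat q\}$. *)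

theory Defs
  imports "HOL-Analysis.Analysis"
begin

text \<open>Values in Q/Z are represented by rationals; two values are equal in Q/Z iff
  their difference is an integer. The finite abelian group D is a finite type
  of class ab_group_add.\<close>

definition qz_eq :: "rat \<Rightarrow> rat \<Rightarrow> bool" where
  "qz_eq a c \<longleftrightarrow> a - c \<in> \<int>"

definition group_aut :: "('a::ab_group_add \<Rightarrow> 'a) \<Rightarrow> bool" where
  "group_aut f \<longleftrightarrow> bij f \<and> (\<forall>x y. f (x + y) = f x + f y)"

definition finite_bilinear_form :: "('a::{finite,ab_group_add} \<Rightarrow> 'a \<Rightarrow> rat) \<Rightarrow> bool" where
  "finite_bilinear_form b \<longleftrightarrow>
     (\<forall>x y. qz_eq (b x y) (b y x)) \<and>
     (\<forall>x y z. qz_eq (b (x + y) z) (b x z + b y z)) \<and>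
     (\<forall>x. (\<forall>y. qz_eq (b x y) 0) \<longrightarrow> x = 0)"

definition iso_to_neg :: "('a::ab_group_add \<Rightarrow> 'a \<Rightarrow> rat) \<Rightarrow> bool" where
  "iso_to_neg b \<longleftrightarrow> (\<exists>f. group_aut f \<and> (\<forall>x y. qz_eq (b (f x) (f y)) (- b x y)))"

definition quad_refinement :: "('a::ab_group_add \<Rightarrow> 'a \<Rightarrow> rat) \<Rightarrow> ('a \<Rightarrow> rat) \<Rightarrow> bool" where
  "quad_refinement b q \<longleftrightarrow> (\<forall>x y. qz_eq (q (x + y) - q x - q y + q 0) (b x y))"

definition qr_equiv :: "('a::ab_group_add \<Rightarrow> rat) \<Rightarrow> ('a \<Rightarrow> rat) \<Rightarrow> bool" where
  "qr_equiv q q' \<longleftrightarrow> (\<exists>\<delta>. \<forall>x. qz_eq (q x) (q' (x + \<delta>)))"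

definition T_refinement :: "('a::ab_group_add \<Rightarrow> 'a \<Rightarrow> rat) \<Rightarrow> ('a \<Rightarrow> rat) \<Rightarrow> bool" where
  "T_refinement b q \<longleftrightarrow> quad_refinement b q \<and>
     (\<exists>\<gamma>. group_aut \<gamma> \<and> qr_equiv (q \<circ> \<gamma>) (\<lambda>x. - q x))"

definition tau1 :: "('a::finite \<Rightarrow> rat) \<Rightarrow> complex" where
  "tau1 q = (\<Sum>x\<in>UNIV. exp (2 * pi * \<i> * of_real (real_of_rat (q x))))"

end

theory Submission
  imports Defs
begin


definition ee :: "rat \<Rightarrow> complex" where
  "ee r = exp (2 * pi * \<i> * of_real (real_of_rat r))"

lemma ee_add: "ee (a + c) = ee a * ee c"
  unfolding ee_def by (simp add: of_rat_add distrib_left exp_add)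

lemma ee_int: assumes "a \<in> \<int>" shows "ee a = 1"
proof -
  from assms obtain n where "a = of_int n" by (auto elim: Ints_cases)
  hence "ee a = exp ((2 * of_int n * pi) * \<i>)" unfolding ee_def by (simp add: mult_ac)
  also have "\<dots> = 1" by (rule exp_integer_2pi) simp
  finally show ?thesis .
qed

lemma ee_eq1: assumes "ee a = 1" shows "a \<in> \<int>"
proof -
  from assms have "exp (2 * pi * \<i> * of_real (real_of_rat a)) = 1" unfolding ee_def .
  then obtain n :: int where "2 * pi * real_of_rat a = of_int (2*n) * pi"
    by (auto simp: exp_eq_1)
  hence "real_of_rat a = of_int n" by simp
  hence "a = of_int n" by (metis of_rat_eq_iff of_rat_of_int_eq)
  thus ?thesis by simp
qed

lemma qz_ee: "qz_eq a c \<Longrightarrow> ee a = ee c"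
proof -
  assume "qz_eq a c"
  hence "a - c \<in> \<int>" by (simp add: qz_eq_def)
  hence "ee (a - c) = 1" by (rule ee_int)
  hence "ee (a - c) * ee c = ee c" by simp
  thus "ee a = ee c" by (simp add: ee_add[symmetric])
qed

lemma ee_neg: "ee (- a) = cnj (ee a)"
  unfolding ee_def by (simp add: exp_cnj of_rat_minus)

lemma norm_ee [simp]: "norm (ee a) = 1"
  unfolding ee_def by (simp add: norm_exp_eq_Re)

lemma ee_nz [simp]: "ee a \<noteq> 0"
  unfolding ee_def by simp

lemma sum_bij_reindex:
  fixes h :: "'a::finite \<Rightarrow> 'a"
  assumes "bij h" shows "(\<Sum>x\<in>UNIV. g (h x)) = (\<Sum>x\<in>UNIV. g x)"
  using assms by (rule sum.reindex_bij_betw)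

lemma bij_plus: "bij (\<lambda>x::'a::ab_group_add. x + y)"
  by (rule bij_betw_byWitness[where f'="\<lambda>x. x - y"]) auto


lemma char_sum:
  fixes \<psi> :: "'a::{finite,ab_group_add} \<Rightarrow> rat"
  assumes hom: "\<And>x y. \<psi> (x + y) - \<psi> x - \<psi> y \<in> \<int>"
  shows "(\<Sum>x\<in>UNIV. ee (\<psi> x)) = (if \<forall>x. \<psi> x \<in> \<int> then of_nat CARD('a) else 0)"
proof (cases "\<forall>x. \<psi> x \<in> \<int>")
  case True
  then show ?thesis by (simp add: ee_int)
next
  case False
  then obtain y where y: "\<psi> y \<notin> \<int>" by blast
  let ?S = "\<Sum>x\<in>UNIV. ee (\<psi> x)"
  have "?S = (\<Sum>x\<in>UNIV. ee (\<psi> (x + y)))"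
    using sum_bij_reindex[OF bij_plus, of "\<lambda>x. ee (\<psi> x)" y] by simp
  also have "\<dots> = (\<Sum>x\<in>UNIV. ee (\<psi> x) * ee (\<psi> y))"
  proof (rule sum.cong)
    fix x
    have "qz_eq (\<psi> (x + y)) (\<psi> x + \<psi> y)" using hom[of x y] by (simp add: qz_eq_def diff_diff_eq)
    thus "ee (\<psi> (x + y)) = ee (\<psi> x) * ee (\<psi> y)" by (simp add: qz_ee ee_add)
  qed simp
  also have "\<dots> = ?S * ee (\<psi> y)" by (simp add: sum_distrib_right)
  finally have "?S * (1 - ee (\<psi> y)) = 0" by (simp add: algebra_simps)
  moreover have "ee (\<psi> y) \<noteq> 1" using y ee_eq1 by blast
  ultimately have "?S = 0" by simp
  thus ?thesis using False by simp
qed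

locale fbf =
  fixes b :: "'a::{finite,ab_group_add} \<Rightarrow> 'a \<Rightarrow> rat"
  assumes fbf: "finite_bilinear_form b"
begin

lemma symI: "b x y - b y x \<in> \<int>"
  using fbf unfolding finite_bilinear_form_def qz_eq_def by blast

lemma lin1: "b (x + y) z - b x z - b y z \<in> \<int>"
proof -
  have "b (x + y) z - (b x z + b y z) \<in> \<int>"
    using fbf unfolding finite_bilinear_form_def qz_eq_def by blast
  thus ?thesis by (simp add: diff_diff_eq)
qed

lemma lin2: "b z (x + y) - b z x - b z y \<in> \<int>"
proof -
  have "b z (x + y) - b z x - b z y = (b z (x+y) - b (x+y) z) + (b (x + y) z - b x z - b y z)
     - (b z x - b x z) - (b z y - b y z)" by simp
  thus ?thesis using symI lin1 by (metis Ints_add Ints_diff)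
qed

lemma nondeg: "(\<And>y. b x y \<in> \<int>) \<Longrightarrow> x = 0"
  using fbf unfolding finite_bilinear_form_def qz_eq_def by simp

lemma b0l: "b 0 y \<in> \<int>"
  using lin1[of 0 0 y] by simp

lemma b0r: "b y 0 \<in> \<int>"
  using lin2[of y 0 0] by simp

lemma L1: "(\<Sum>y\<in>UNIV. ee (b d y)) = (if d = 0 then of_nat CARD('a) else 0)"
proof -
  have "(\<Sum>y\<in>UNIV. ee (b d y)) = (if \<forall>y. b d y \<in> \<int> then of_nat CARD('a) else 0)"
    by (rule char_sum) (rule lin2)
  moreover have "(\<forall>y. b d y \<in> \<int>) \<longleftrightarrow> d = 0" using nondeg b0l by blast
  ultimately show ?thesis by simp
qed

lemma dual:
  fixes ch :: "'a \<Rightarrow> rat"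
  assumes hom: "\<And>x y. ch (x + y) - ch x - ch y \<in> \<int>"
  shows "\<exists>\<delta>. \<forall>x. ch x - b x \<delta> \<in> \<int>"
proof (rule ccontr)
  assume nex: "\<not> ?thesis"
  let ?N = "of_nat CARD('a) :: complex"
  let ?S = "\<Sum>d\<in>UNIV. \<Sum>x\<in>UNIV. ee (ch x - b x d)"
  have "\<forall>d. (\<Sum>x\<in>UNIV. ee (ch x - b x d)) = 0"
  proof
    fix d
    have "(\<Sum>x\<in>UNIV. ee (ch x - b x d)) = (if \<forall>x. ch x - b x d \<in> \<int> then ?N else 0)"
    proof (rule char_sum)
      fix x y
      have "ch (x + y) - b (x + y) d - (ch x - b x d) - (ch y - b y d) =
        (ch (x + y) - ch x - ch y) - (b (x + y) d - b x d - b y d)" by simp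
      thus "ch (x + y) - b (x + y) d - (ch x - b x d) - (ch y - b y d) \<in> \<int>"
        using hom lin1 by (metis Ints_diff)
    qed
    thus "(\<Sum>x\<in>UNIV. ee (ch x - b x d)) = 0" using nex by auto
  qed
  hence S0: "?S = 0" by simp
  have "?S = (\<Sum>x\<in>UNIV. \<Sum>d\<in>UNIV. ee (ch x) * cnj (ee (b x d)))"
    by (subst sum.swap) (simp add: ee_add[symmetric] ee_neg[symmetric])
  also have "\<dots> = (\<Sum>x\<in>UNIV. ee (ch x) * cnj (\<Sum>d\<in>UNIV. ee (b x d)))"
    by (simp add: sum_distrib_left)
  also have "\<dots> = (\<Sum>x\<in>UNIV. if (x::'a) = 0 then ee (ch 0) * ?N else 0)"
    by (rule sum.cong) (simp_all add: L1)
  also have "\<dots> = ee (ch 0) * ?N" by simp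
  also have "ch 0 \<in> \<int>"
  proof -
    have "- ch 0 \<in> \<int>" using hom[of 0 0] by simp
    thus ?thesis by (metis Ints_minus minus_minus)
  qed
  hence "ee (ch 0) * ?N = ?N" by (simp add: ee_int)
  finally have "?S = ?N" .
  with S0 show False by simp
qed

end



fun natmul :: "nat \<Rightarrow> 'a::ab_group_add \<Rightarrow> 'a" where
  "natmul 0 g = 0"
| "natmul (Suc n) g = g + natmul n g"

definition zmul :: "int \<Rightarrow> 'a::ab_group_add \<Rightarrow> 'a" where
  "zmul k g = natmul (nat k) g - natmul (nat (- k)) g"

lemma natmul_add: "natmul (m + n) g = natmul m g + natmul n g"
  by (induction m) (simp_all add: add_ac)

lemma natmul_plus: "natmul n (g + h) = natmul n g + natmul n h"
  by (induction n) (simp_all add: algebra_simps)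

lemma natmul_diff: "natmul n (g - h) = natmul n g - natmul n h"
  by (induction n) (simp_all add: algebra_simps)

lemma natmul_mult: "natmul (m * n) g = natmul m (natmul n g)"
  by (induction m) (simp_all add: natmul_add)

lemma natmul_comm: "natmul m (natmul n g) = natmul n (natmul m g)"
  by (metis natmul_mult mult.commute)

lemma zmul_repr: "zmul (int p - int q) g = natmul p g - natmul q g"
proof -
  let ?a = "int p - int q"
  have "nat ?a + q = p + nat (- ?a)" by simp
  hence "natmul (nat ?a + q) g = natmul (p + nat (- ?a)) g" by simp
  hence "natmul (nat ?a) g + natmul q g = natmul p g + natmul (nat (- ?a)) g"
    by (simp add: natmul_add)
  thus ?thesis unfolding zmul_def by (simp add: algebra_simps)
qed

lemma int_split: "(a::int) = int (nat a) - int (nat (- a))" by simp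

lemma zmul_add: "zmul (a + c) g = zmul a g + zmul c g"
proof -
  have "a + c = int (nat a + nat c) - int (nat (- a) + nat (- c))" by simp
  hence "zmul (a + c) g = natmul (nat a + nat c) g - natmul (nat (- a) + nat (- c)) g"
    by (metis zmul_repr)
  thus ?thesis unfolding zmul_def[of a] zmul_def[of c] by (simp add: natmul_add algebra_simps)
qed

lemma zmul_mult: "zmul (a * c) g = zmul a (zmul c g)"
proof -
  obtain pa qa pc qc where a: "a = int pa - int qa" and c: "c = int pc - int qc"
    using int_split by blast
  have "a * c = int (pa * pc + qa * qc) - int (pa * qc + qa * pc)"
    unfolding a c by (simp add: algebra_simps)
  hence "zmul (a * c) g = natmul (pa * pc + qa * qc) g - natmul (pa * qc + qa * pc) g"
    by (metis zmul_repr)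
  also have "\<dots> = zmul a (zmul c g)"
    unfolding a c zmul_repr by (simp add: natmul_diff natmul_add natmul_mult algebra_simps natmul_comm[of qa pc])
  finally show ?thesis .
qed

lemma zmul_neg: "zmul (- a) g = - zmul a g"
  unfolding zmul_def by simp

lemma zmul_0 [simp]: "zmul 0 g = 0" unfolding zmul_def by simp
lemma zmul_1 [simp]: "zmul 1 g = g" unfolding zmul_def by simp
lemma zmul_int: "zmul (int p) g = natmul p g" using zmul_repr[of p 0] by simp

lemma zmul_diff: "zmul (a - c) g = zmul a g - zmul c g"
  using zmul_add[of a "-c" g] zmul_neg[of c g] by simp

lemma natmul_period:
  fixes g :: "'a::{finite,ab_group_add}"
  shows "\<exists>p>0. natmul p g = 0"
proof -
  let ?N = "CARD('a)"
  have "\<not> inj_on (\<lambda>i. natmul i g) {0..?N}"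
  proof
    assume "inj_on (\<lambda>i. natmul i g) {0..?N}"
    hence "card {0..?N} \<le> card (UNIV :: 'a set)"
      by (rule card_inj_on_le) auto
    thus False by simp
  qed
  then obtain i j where ij: "i \<noteq> j" "natmul i g = natmul j g"
    unfolding inj_on_def by blast
  show ?thesis
  proof (cases "i < j")
    case True
    have "natmul j g = natmul (j - i) g + natmul i g" using True by (simp add: natmul_add[symmetric])
    thus ?thesis using ij True by (intro exI[of _ "j - i"]) simp
  next
    case False
    hence "j < i" using ij by simp
    have "natmul i g = natmul (i - j) g + natmul j g" using \<open>j < i\<close> by (simp add: natmul_add[symmetric])
    thus ?thesis using ij \<open>j < i\<close> by (intro exI[of _ "i - j"]) simp
  qed
qed



lemma Ints_imul: "z \<in> \<int> \<Longrightarrow> (of_int a :: rat) * z \<in> \<int>"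
  by (simp add: Ints_mult)

lemma Ints_diff_cancel: "(a::rat) - c \<in> \<int> \<Longrightarrow> c - a \<in> \<int>"
  by (metis Ints_minus minus_diff_eq)

context fbf begin

lemma b_neg_l: "b (- x) y + b x y \<in> \<int>"
proof -
  have "b (x + - x) y - b x y - b (- x) y \<in> \<int>" by (rule lin1)
  hence "b 0 y - (b (- x) y + b x y) \<in> \<int>" by (simp add: algebra_simps)
  from Ints_diff[OF b0l[of y] this] show ?thesis by simp
qed

lemma b_natmul_l: "b (natmul n x) y - of_nat n * b x y \<in> \<int>"
proof (induction n)
  case 0
  then show ?case using b0l by simp
next
  case (Suc n)
  have eq: "b (natmul (Suc n) x) y - of_nat (Suc n) * b x y =
    (b (x + natmul n x) y - b x y - b (natmul n x) y) + (b (natmul n x) y - of_nat n * b x y)"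
    by (simp add: algebra_simps)
  show ?case unfolding eq by (rule Ints_add[OF lin1 Suc])
qed

lemma b_zmul_l: "b (zmul k x) y - of_int k * b x y \<in> \<int>"
proof -
  obtain p q where k: "k = int p - int q" using int_split by blast
  have z: "zmul k x = natmul p x + - natmul q x" unfolding k zmul_repr by simp
  have eq: "b (zmul k x) y - of_int k * b x y =
     (b (natmul p x + - natmul q x) y - b (natmul p x) y - b (- natmul q x) y)
     + (b (natmul p x) y - of_nat p * b x y)
     + (b (- natmul q x) y + b (natmul q x) y)
     - (b (natmul q x) y - of_nat q * b x y)"
    unfolding z by (simp add: k algebra_simps)
  show ?thesis unfolding eq
    by (rule Ints_diff[OF Ints_add[OF Ints_add[OF lin1 b_natmul_l] b_neg_l] b_natmul_l])
qed

lemma b_zmul_r: "b y (zmul k x) - of_int k * b y x \<in> \<int>"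
proof -
  have eq: "b y (zmul k x) - of_int k * b y x = (b y (zmul k x) - b (zmul k x) y)
     + (b (zmul k x) y - of_int k * b x y) + of_int k * (b x y - b y x)"
    by (simp add: algebra_simps)
  show ?thesis unfolding eq
    by (rule Ints_add[OF Ints_add[OF symI b_zmul_l] Ints_imul[OF symI]])
qed

lemma b_zmul_both: "b (zmul a x) (zmul c y) - of_int a * of_int c * b x y \<in> \<int>"
proof -
  have eq: "b (zmul a x) (zmul c y) - of_int a * of_int c * b x y =
    (b (zmul a x) (zmul c y) - of_int a * b x (zmul c y)) + of_int a * (b x (zmul c y) - of_int c * b x y)"
    by (simp add: algebra_simps)
  show ?thesis unfolding eq by (rule Ints_add[OF b_zmul_l Ints_imul[OF b_zmul_r]])
qed

end

definition subgrp :: "'a::ab_group_add set \<Rightarrow> bool" where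
  "subgrp H \<longleftrightarrow> 0 \<in> H \<and> (\<forall>x\<in>H. \<forall>y\<in>H. x + y \<in> H) \<and> (\<forall>x\<in>H. - x \<in> H)"

definition refines_on :: "('a::ab_group_add \<Rightarrow> 'a \<Rightarrow> rat) \<Rightarrow> 'a set \<Rightarrow> ('a \<Rightarrow> rat) \<Rightarrow> bool" where
  "refines_on b H Q \<longleftrightarrow> (\<forall>x\<in>H. \<forall>y\<in>H. Q (x + y) - Q x - Q y - b x y \<in> \<int>)"

definition adjoin :: "'a::ab_group_add set \<Rightarrow> 'a \<Rightarrow> 'a set" where
  "adjoin H g = {h + zmul k g | h k. h \<in> H}"

lemma subgrp_natmul: "subgrp H \<Longrightarrow> h \<in> H \<Longrightarrow> natmul n h \<in> H"
  by (induction n) (auto simp: subgrp_def)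

lemma subgrp_diff: "subgrp H \<Longrightarrow> x \<in> H \<Longrightarrow> y \<in> H \<Longrightarrow> x - y \<in> H"
  unfolding subgrp_def by (metis diff_conv_add_uminus)

lemma subgrp_zmul: "subgrp H \<Longrightarrow> h \<in> H \<Longrightarrow> zmul k h \<in> H"
  unfolding zmul_def using subgrp_natmul[of H h] subgrp_diff by blast

lemma subgrp_adjoin: "subgrp H \<Longrightarrow> subgrp (adjoin H g)"
proof -
  assume H: "subgrp H"
  have "0 \<in> adjoin H g" unfolding adjoin_def using H by (auto simp: subgrp_def intro!: exI[of _ 0])
  moreover have "x + y \<in> adjoin H g" if "x \<in> adjoin H g" "y \<in> adjoin H g" for x y
  proof -
    from that obtain h1 k1 h2 k2 where "x = h1 + zmul k1 g" "y = h2 + zmul k2 g" "h1 \<in> H" "h2 \<in> H"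
      unfolding adjoin_def by blast
    hence "x + y = (h1 + h2) + zmul (k1 + k2) g" "h1 + h2 \<in> H"
      using H by (auto simp: zmul_add subgrp_def algebra_simps)
    thus ?thesis unfolding adjoin_def by blast
  qed
  moreover have "- x \<in> adjoin H g" if "x \<in> adjoin H g" for x
  proof -
    from that obtain h k where "x = h + zmul k g" "h \<in> H"
      unfolding adjoin_def by blast
    hence "- x = (- h) + zmul (- k) g" "- h \<in> H"
      using H by (auto simp: zmul_neg subgrp_def)
    thus ?thesis unfolding adjoin_def by blast
  qed
  ultimately show ?thesis unfolding subgrp_def by blast
qed



context fbf begin

lemma extend:
  assumes H: "subgrp H" and R: "refines_on b H Q"
  shows "\<exists>Q'. refines_on b (adjoin H g) Q'"
proof -
  have QH: "Q (x + y) - Q x - Q y - b x y \<in> \<int>" if "x \<in> H" "y \<in> H" for x y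
    using R that unfolding refines_on_def by blast
  have H0: "0 \<in> H" using H unfolding subgrp_def by blast
  have Q0: "Q 0 \<in> \<int>"
  proof -
    have "- (Q (0 + 0) - Q 0 - Q 0 - b 0 0 + b 0 0) \<in> \<int>"
      by (rule Ints_minus[OF Ints_add[OF QH[OF H0 H0] b0l]])
    thus ?thesis by simp
  qed
  define M where "M = {m. zmul m g \<in> H}"
  have M_add: "m1 + m2 \<in> M" if "m1 \<in> M" "m2 \<in> M" for m1 m2
    using that H unfolding M_def subgrp_def by (simp add: zmul_add)
  have M_mult: "c * m \<in> M" if "m \<in> M" for c m
    using that H subgrp_zmul unfolding M_def by (simp add: zmul_mult)
  obtain p where p: "p > 0" "natmul p g = 0" using natmul_period by blast
  have pM: "int p \<in> M" using p H0 unfolding M_def by (simp add: zmul_int)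
  define n0 where "n0 = (LEAST k::nat. 0 < k \<and> int k \<in> M)"
  define n where "n = int n0"
  have "0 < n0 \<and> int n0 \<in> M" unfolding n0_def
    by (rule LeastI[of _ p]) (use p pM in simp)
  hence n: "0 < n \<and> n \<in> M" unfolding n_def by simp
  have ndvd: "n dvd m" if "m \<in> M" for m
  proof -
    define r where "r = m mod n"
    have "r = m + (- (m div n)) * n" unfolding r_def by (simp add: minus_div_mult_eq_mod[symmetric])
    moreover have "m + (- (m div n)) * n \<in> M" using M_add M_mult that n by blast
    ultimately have rM: "r \<in> M" by simp
    have r: "0 \<le> r" "r < n" unfolding r_def using n by auto
    have "r = 0"
    proof (rule ccontr)
      assume "r \<noteq> 0"
      hence "0 < nat r \<and> int (nat r) \<in> M" using r rM by simp
      hence "n0 \<le> nat r" unfolding n0_def by (rule Least_le)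
      thus False using r unfolding n_def by simp
    qed
    thus ?thesis unfolding r_def by (simp add: dvd_eq_mod_eq_0)
  qed
  define \<beta> where "\<beta> = b g g"
  define C :: "int \<Rightarrow> rat" where "C k = of_int k * (of_int k - 1) / 2" for k
  have Cadd: "C (a + c) = C a + C c + of_int a * of_int c" for a c
    unfolding C_def by (simp add: field_simps)
  define \<psi> where "\<psi> m = Q (zmul m g) - C m * \<beta>" for m
  have \<psi>hom: "\<psi> (m1 + m2) - \<psi> m1 - \<psi> m2 \<in> \<int>" if "m1 \<in> M" "m2 \<in> M" for m1 m2
  proof -
    have eq: "\<psi> (m1 + m2) - \<psi> m1 - \<psi> m2 =
      (Q (zmul m1 g + zmul m2 g) - Q (zmul m1 g) - Q (zmul m2 g) - b (zmul m1 g) (zmul m2 g))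
      + (b (zmul m1 g) (zmul m2 g) - of_int m1 * of_int m2 * b g g)"
      unfolding \<psi>_def Cadd zmul_add \<beta>_def by (simp add: algebra_simps)
    show ?thesis unfolding eq
      by (rule Ints_add[OF QH b_zmul_both]) (use that in \<open>auto simp: M_def\<close>)
  qed
  have \<psi>0: "\<psi> 0 \<in> \<int>" using Q0 unfolding \<psi>_def C_def by simp
  define t where "t = \<psi> n / of_int n"
  have \<psi>nat: "\<psi> (int j * n) - of_int (int j) * \<psi> n \<in> \<int>" for j
  proof (induction j)
    case 0
    then show ?case using \<psi>0 by simp
  next
    case (Suc j)
    have eq: "\<psi> (int (Suc j) * n) - of_int (int (Suc j)) * \<psi> n =
      (\<psi> (int j * n + n) - \<psi> (int j * n) - \<psi> n) + (\<psi> (int j * n) - of_int (int j) * \<psi> n)"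
      by (simp add: algebra_simps)
    show ?case unfolding eq
      by (rule Ints_add[OF \<psi>hom Suc]) (use M_mult n in auto)
  qed
  have \<psi>lin: "\<psi> m - of_int m * t \<in> \<int>" if mM: "m \<in> M" for m
  proof -
    obtain j where j: "m = j * n" using ndvd[OF mM] by (auto simp: dvd_def mult.commute)
    have nt: "of_int n * t = \<psi> n" unfolding t_def using n by simp
    have mt: "of_int m * t = of_int j * \<psi> n" unfolding j using nt by (simp add: mult.assoc)
    show ?thesis
    proof (cases "j \<ge> 0")
      case True
      then obtain k where "j = int k" by (metis nonneg_int_cases)
      thus ?thesis unfolding mt unfolding j using \<psi>nat by simp
    next
      case False
      define k where "k = nat (- j)"
      have k: "j = - int k" using False unfolding k_def by simp
      have eq: "\<psi> m - of_int m * t =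
        \<psi> 0 - (\<psi> (- (int k * n) + int k * n) - \<psi> (- (int k * n)) - \<psi> (int k * n))
          - (\<psi> (int k * n) - of_int (int k) * \<psi> n)"
        unfolding mt unfolding j k by simp
      have kM: "int k * n \<in> M" "- (int k * n) \<in> M" using M_mult n
        by (auto simp del: mult_minus_left simp: mult_minus_left[symmetric])
      show ?thesis unfolding eq
        by (rule Ints_diff[OF Ints_diff[OF \<psi>0 \<psi>hom[OF kM(2) kM(1)]] \<psi>nat])
    qed
  qed
  define F where "F h k = Q h + of_int k * b h g + C k * \<beta> + of_int k * t" for h k
  have wd1: "F (h + zmul m g) (k - m) - F h k \<in> \<int>" if "h \<in> H" "m \<in> M" for h m k
  proof -
    have zm: "zmul m g \<in> H" using that unfolding M_def by simp
    have Ck: "C k = C (k - m) + C m + of_int (k - m) * of_int m" using Cadd[of "k - m" m] by simp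
    have eq: "F (h + zmul m g) (k - m) - F h k =
      (Q (h + zmul m g) - Q h - Q (zmul m g) - b h (zmul m g))
      + (b h (zmul m g) - of_int m * b h g)
      + of_int (k - m) * ((b (h + zmul m g) g - b h g - b (zmul m g) g) + (b (zmul m g) g - of_int m * b g g))
      + (\<psi> m - of_int m * t)"
      unfolding F_def \<psi>_def Ck \<beta>_def by (simp add: algebra_simps)
    show ?thesis unfolding eq
      by (rule Ints_add[OF Ints_add[OF Ints_add[OF QH[OF that(1) zm] b_zmul_r]
            Ints_imul[OF Ints_add[OF lin1 b_zmul_l]]] \<psi>lin[OF that(2)]])
  qed
  have wd: "F h1 k1 - F h2 k2 \<in> \<int>" if "h1 \<in> H" "h2 \<in> H" "h1 + zmul k1 g = h2 + zmul k2 g"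
    for h1 h2 k1 k2
  proof -
    have "zmul (k1 - k2) g = h2 - h1" using that(3) by (simp add: zmul_diff algebra_simps)
    hence mM: "k1 - k2 \<in> M" "h2 = h1 + zmul (k1 - k2) g" using that H subgrp_diff unfolding M_def
      by auto
    have "F (h1 + zmul (k1 - k2) g) (k1 - (k1 - k2)) - F h1 k1 \<in> \<int>" by (rule wd1[OF that(1) mM(1)])
    hence "F h2 k2 - F h1 k1 \<in> \<int>" using mM(2) by simp
    thus ?thesis by (rule Ints_diff_cancel)
  qed
  define Q' where "Q' x = (let hk = (SOME hk. fst hk \<in> H \<and> x = fst hk + zmul (snd hk) g)
     in F (fst hk) (snd hk))" for x
  have Q'F: "Q' (h + zmul k g) - F h k \<in> \<int>" if "h \<in> H" for h k
  proof -
    let ?P = "\<lambda>hk. fst hk \<in> H \<and> h + zmul k g = fst hk + zmul (snd hk) g"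
    have "?P (h, k)" using that by simp
    hence P: "?P (SOME hk. ?P hk)" by (rule someI)
    have "Q' (h + zmul k g) = F (fst (SOME hk. ?P hk)) (snd (SOME hk. ?P hk))"
      unfolding Q'_def Let_def ..
    thus ?thesis using wd[of "fst (SOME hk. ?P hk)" h "snd (SOME hk. ?P hk)" k] P that by simp
  qed
  have "refines_on b (adjoin H g) Q'"
    unfolding refines_on_def
  proof (intro ballI)
    fix x y assume "x \<in> adjoin H g" "y \<in> adjoin H g"
    then obtain h1 k1 h2 k2 where xy: "x = h1 + zmul k1 g" "y = h2 + zmul k2 g" and hH: "h1 \<in> H" "h2 \<in> H"
      unfolding adjoin_def by blast
    have h12: "h1 + h2 \<in> H" using H hH unfolding subgrp_def by blast
    have xy2: "x + y = (h1 + h2) + zmul (k1 + k2) g" unfolding xy zmul_add by (simp add: algebra_simps)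
    let ?z1 = "zmul k1 g" and ?z2 = "zmul k2 g"
    have eqE: "F (h1 + h2) (k1 + k2) - F h1 k1 - F h2 k2 - b x y =
       (Q (h1 + h2) - Q h1 - Q h2 - b h1 h2)
       + of_int (k1 + k2) * (b (h1 + h2) g - b h1 g - b h2 g)
       - (b (h1 + ?z1) (h2 + ?z2) - b h1 (h2 + ?z2) - b ?z1 (h2 + ?z2))
       - (b h1 (h2 + ?z2) - b h1 h2 - b h1 ?z2)
       - (b ?z1 (h2 + ?z2) - b ?z1 h2 - b ?z1 ?z2)
       - (b h1 ?z2 - of_int k2 * b h1 g)
       - (b ?z1 h2 - of_int k1 * b g h2)
       - (b ?z1 ?z2 - of_int k1 * of_int k2 * b g g)
       - of_int k1 * (b g h2 - b h2 g)"
      unfolding F_def xy Cadd \<beta>_def by (simp add: algebra_simps)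
    have E: "F (h1 + h2) (k1 + k2) - F h1 k1 - F h2 k2 - b x y \<in> \<int>"
      unfolding eqE
      by (rule Ints_diff[OF Ints_diff[OF Ints_diff[OF Ints_diff[OF Ints_diff[OF Ints_diff[OF Ints_diff[OF
            Ints_add[OF QH[OF hH] Ints_imul[OF lin1]] lin1] lin2] lin2] b_zmul_r] b_zmul_l] b_zmul_both]
            Ints_imul[OF symI]])
    have eq: "Q' (x + y) - Q' x - Q' y - b x y =
      (Q' ((h1 + h2) + zmul (k1 + k2) g) - F (h1 + h2) (k1 + k2))
      - (Q' (h1 + zmul k1 g) - F h1 k1) - (Q' (h2 + zmul k2 g) - F h2 k2)
      + (F (h1 + h2) (k1 + k2) - F h1 k1 - F h2 k2 - b x y)"
      unfolding xy2 by (simp add: xy)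
    show "Q' (x + y) - Q' x - Q' y - b x y \<in> \<int>" unfolding eq
      by (rule Ints_add[OF Ints_diff[OF Ints_diff[OF Q'F[OF h12] Q'F[OF hH(1)]] Q'F[OF hH(2)]] E])
  qed
  thus ?thesis by blast
qed

lemma exists_refinement: "\<exists>Q. \<forall>x y. Q (x + y) - Q x - Q y - b x y \<in> \<int>"
proof -
  define sp where "sp gs = foldr (\<lambda>g H. adjoin H g) gs {0}" for gs :: "'a list"
  have main: "subgrp (sp gs) \<and> (\<exists>Q. refines_on b (sp gs) Q) \<and> set gs \<subseteq> sp gs" for gs
  proof (induction gs)
    case Nil
    have "refines_on b {0} (\<lambda>_. 0)" unfolding refines_on_def using Ints_minus[OF b0l[of 0]] by simp
    then show ?case unfolding sp_def subgrp_def by auto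
  next
    case (Cons g gs)
    have s: "sp (g # gs) = adjoin (sp gs) g" unfolding sp_def by simp
    have "subgrp (sp (g # gs))" unfolding s using Cons subgrp_adjoin by blast
    moreover have "\<exists>Q. refines_on b (sp (g # gs)) Q" unfolding s using Cons extend by blast
    moreover have "set (g # gs) \<subseteq> sp (g # gs)"
    proof -
      have "g \<in> adjoin (sp gs) g" unfolding adjoin_def using Cons
        by (auto simp: subgrp_def intro!: exI[of _ 0] exI[of _ 1])
      moreover have "x \<in> adjoin (sp gs) g" if "x \<in> set gs" for x
      proof -
        have "x \<in> sp gs" using Cons that by auto
        hence "\<exists>h k. x = h + zmul k g \<and> h \<in> sp gs" by (intro exI[of _ x] exI[of _ 0]) simp
        thus ?thesis unfolding adjoin_def by blast
      qed
      ultimately show ?thesis unfolding s by auto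
    qed
    ultimately show ?case by blast
  qed
  obtain gs :: "'a list" where "set gs = UNIV" using finite_list[of "UNIV :: 'a set"] by auto
  hence "sp gs = UNIV" using main[of gs] by auto
  then obtain Q where "refines_on b UNIV Q" using main[of gs] by auto
  thus ?thesis unfolding refines_on_def by blast
qed

end



lemma ee_half: "ee (1/2) = -1"
  unfolding ee_def by (simp add: of_rat_divide mult.commute)

lemma ee_sigma: "ee (of_int s / 8) = exp (2 * pi * \<i> * of_int s / 8)"
  unfolding ee_def by (simp add: of_rat_divide)

lemma tau1_ee: "tau1 q = (\<Sum>x\<in>UNIV. ee (q x))"
  unfolding tau1_def ee_def ..

context fbf begin

lemma tau_nz:
  assumes hom: "\<And>x y. Q (x + y) - Q x - Q y - b x y \<in> \<int>" and Q0: "Q 0 = 0"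
  shows "(\<Sum>x\<in>UNIV. ee (Q x)) \<noteq> 0"
proof -
  let ?T = "\<Sum>x\<in>UNIV. ee (Q x)"
  let ?N = "of_nat CARD('a) :: complex"
  have "?T * cnj ?T = (\<Sum>x\<in>UNIV. \<Sum>y\<in>UNIV. ee (Q x) * ee (- Q y))"
    by (simp add: sum_product ee_neg)
  also have "\<dots> = (\<Sum>y\<in>UNIV. \<Sum>x\<in>UNIV. ee (Q x) * ee (- Q y))" by (rule sum.swap)
  also have "\<dots> = (\<Sum>y\<in>UNIV. \<Sum>d\<in>UNIV. ee (Q d) * ee (b d y))"
  proof (rule sum.cong[OF refl])
    fix y
    have "(\<Sum>x\<in>UNIV. ee (Q x) * ee (- Q y)) = (\<Sum>d\<in>UNIV. ee (Q (d + y)) * ee (- Q y))"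
      using sum_bij_reindex[OF bij_plus, of "\<lambda>x. ee (Q x) * ee (- Q y)" y] by simp
    also have "\<dots> = (\<Sum>d\<in>UNIV. ee (Q d) * ee (b d y))"
    proof (rule sum.cong[OF refl])
      fix d
      have "qz_eq (Q (d + y) + - Q y) (Q d + b d y)"
        using hom[of d y] unfolding qz_eq_def by (simp add: algebra_simps)
      thus "ee (Q (d + y)) * ee (- Q y) = ee (Q d) * ee (b d y)"
        by (metis ee_add qz_ee)
    qed
    finally show "(\<Sum>x\<in>UNIV. ee (Q x) * ee (- Q y)) = (\<Sum>d\<in>UNIV. ee (Q d) * ee (b d y))" .
  qed
  also have "\<dots> = (\<Sum>d\<in>UNIV. ee (Q d) * (\<Sum>y\<in>UNIV. ee (b d y)))"
    by (subst sum.swap) (simp add: sum_distrib_left)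
  also have "\<dots> = (\<Sum>d\<in>UNIV. if (d::'a) = 0 then ee (Q 0) * ?N else 0)"
    by (rule sum.cong) (simp_all add: L1)
  also have "\<dots> = ?N" using Q0 by (simp add: ee_def)
  finally have "?T * cnj ?T = ?N" .
  thus ?thesis by auto
qed

end

theorem proposition7:
  fixes b :: "'a::{finite,ab_group_add} \<Rightarrow> 'a \<Rightarrow> rat" and \<sigma> :: int
  assumes "finite_bilinear_form b"
    and "iso_to_neg b"
    and "\<sigma> \<in> {0, 4}"
  shows "\<exists>q. T_refinement b q
              \<and> tau1 q / complex_of_real (cmod (tau1 q)) = exp (2 * pi * \<i> * of_int \<sigma> / 8)
              \<and> (\<forall>q'. T_refinement b q'
                    \<and> tau1 q' / complex_of_real (cmod (tau1 q')) = exp (2 * pi * \<i> * of_int \<sigma> / 8)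
                    \<longrightarrow> qr_equiv q' q)"
proof -
  interpret fbf b using assms(1) by unfold_locales
  obtain Q1 where Q1: "\<And>x y. Q1 (x + y) - Q1 x - Q1 y - b x y \<in> \<int>"
    using exists_refinement by blast
  have Q10: "Q1 0 \<in> \<int>"
  proof -
    have "- (Q1 (0 + 0) - Q1 0 - Q1 0 - b 0 0 + b 0 0) \<in> \<int>"
      by (rule Ints_minus[OF Ints_add[OF Q1 b0l]])
    thus ?thesis by simp
  qed
  define Q where "Q x = Q1 x - Q1 0" for x
  have hom: "Q (x + y) - Q x - Q y - b x y \<in> \<int>" for x y
  proof -
    have eq: "Q (x + y) - Q x - Q y - b x y = (Q1 (x + y) - Q1 x - Q1 y - b x y) + Q1 0"
      unfolding Q_def by simp
    show ?thesis unfolding eq by (rule Ints_add[OF Q1 Q10])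
  qed
  have Q0: "Q 0 = 0" unfolding Q_def by simp
  define T where "T = (\<Sum>x\<in>UNIV. ee (Q x))"
  have Tnz: "T \<noteq> 0" unfolding T_def by (rule tau_nz[OF hom Q0])
  from assms(2) obtain f where f: "group_aut f" and fb: "\<And>x y. qz_eq (b (f x) (f y)) (- b x y)"
    unfolding iso_to_neg_def by blast
  have fbij: "bij f" and fadd: "\<And>x y. f (x + y) = f x + f y" using f unfolding group_aut_def by auto
  define R where "R x = Q (f x) + Q x" for x
  have Rhom: "- R (x + y) - - R x - - R y \<in> \<int>" for x y
  proof -
    have eq: "- R (x + y) - - R x - - R y = - ((Q (f x + f y) - Q (f x) - Q (f y) - b (f x) (f y))
      + (Q (x + y) - Q x - Q y - b x y) + (b (f x) (f y) - - b x y))"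
      unfolding R_def fadd by (simp add: algebra_simps)
    have "b (f x) (f y) - - b x y \<in> \<int>" using fb[of x y] unfolding qz_eq_def .
    thus ?thesis unfolding eq by (intro Ints_minus Ints_add[OF Ints_add[OF hom hom]])
  qed
  obtain \<delta> where \<delta>: "\<And>x. - R x - b x \<delta> \<in> \<int>" using dual[of "\<lambda>x. - R x", OF Rhom] by blast
  define k where "k = Q \<delta>"
  have Qf: "qz_eq (Q (f x)) (- Q (x + \<delta>) + k)" for x
  proof -
    have eq: "Q (f x) - (- Q (x + \<delta>) + k) = (Q (x + \<delta>) - Q x - Q \<delta> - b x \<delta>) - (- R x - b x \<delta>)"
      unfolding R_def k_def by (simp add: algebra_simps)
    show ?thesis unfolding qz_eq_def eq by (rule Ints_diff[OF hom \<delta>])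
  qed
  have "T = (\<Sum>x\<in>UNIV. ee (Q (f x)))" unfolding T_def by (rule sum_bij_reindex[OF fbij, symmetric])
  also have "\<dots> = (\<Sum>x\<in>UNIV. ee (- Q (x + \<delta>)) * ee k)"
    by (rule sum.cong[OF refl]) (simp only: qz_ee[OF Qf] ee_add)
  also have "\<dots> = ee k * (\<Sum>x\<in>UNIV. ee (- Q (x + \<delta>)))" by (simp add: sum_distrib_left mult.commute)
  also have "(\<Sum>x\<in>UNIV. ee (- Q (x + \<delta>))) = (\<Sum>x\<in>UNIV. ee (- Q x))"
    by (rule sum_bij_reindex[OF bij_plus])
  also have "\<dots> = cnj T" unfolding T_def by (simp add: ee_neg)
  finally have Tk: "T = ee k * cnj T" .
  define u where "u = T / complex_of_real (cmod T)"
  have cT: "complex_of_real (cmod T) \<noteq> 0" using Tnz by simp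
  have u2: "u * u = ee k"
  proof -
    have "complex_of_real (cmod T) * complex_of_real (cmod T) = T * cnj T"
      using complex_norm_square[of T] by (simp add: power2_eq_square)
    hence "u * u = T * T / (T * cnj T)" unfolding u_def by (simp add: field_simps)
    also have "\<dots> = T / cnj T" using Tnz by simp
    also have "\<dots> = ee k" using Tk Tnz by (simp add: field_simps)
    finally show ?thesis .
  qed
  have unz: "u \<noteq> 0" unfolding u_def using Tnz cT by simp
  obtain \<theta> where \<theta>: "u = ee \<theta>" "2 * \<theta> - k \<in> \<int>"
  proof -
    define w where "w = u / ee (k / 2)"
    have eek: "ee (k / 2) * ee (k / 2) = ee k" by (simp add: ee_add[symmetric])
    have "w * w = 1" unfolding w_def using u2 eek by (simp add: field_simps)
    hence "w = 1 \<or> w = - 1" by (simp add: square_eq_1_iff)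
    thus ?thesis
    proof
      assume "w = 1"
      hence "u = ee (k / 2)" unfolding w_def by simp
      thus ?thesis using that[of "k / 2"] by simp
    next
      assume "w = - 1"
      hence "u = ee (k / 2) * ee (1 / 2)" unfolding w_def by (simp add: ee_half field_simps)
      hence "u = ee (k / 2 + 1 / 2)" by (simp add: ee_add)
      moreover have "2 * (k / 2 + 1 / 2) - k \<in> \<int>" by simp
      ultimately show ?thesis using that by blast
    qed
  qed
  define c where "c = of_int \<sigma> / 8 - \<theta>"
  define q where "q x = Q x + c" for x
  have tq: "tau1 q = ee c * T" unfolding tau1_ee T_def q_def
    by (simp add: ee_add sum_distrib_left mult.commute)
  have norm_ee_T: "complex_of_real (cmod (ee a * T)) = complex_of_real (cmod T)" for a
    by (simp add: norm_mult)
  have phase_q: "tau1 q / complex_of_real (cmod (tau1 q)) = ee c * u"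
    unfolding tq norm_ee_T u_def by simp
  have target: "ee c * u = exp (2 * pi * \<i> * of_int \<sigma> / 8)"
    unfolding \<theta>(1) ee_add[symmetric] c_def ee_sigma[symmetric] by simp
  have sig: "of_int \<sigma> / (4::rat) \<in> \<int>" using assms(3) by auto
  have qref: "quad_refinement b q"
    unfolding quad_refinement_def qz_eq_def
  proof (intro allI)
    fix x y
    have eq: "q (x + y) - q x - q y + q 0 - b x y = Q (x + y) - Q x - Q y - b x y"
      unfolding q_def using Q0 by simp
    show "q (x + y) - q x - q y + q 0 - b x y \<in> \<int>" unfolding eq by (rule hom)
  qed
  have Tq: "T_refinement b q"
    unfolding T_refinement_def
  proof (intro conjI qref exI[of _ f] f)
    show "qr_equiv (q \<circ> f) (\<lambda>x. - q x)"
      unfolding qr_equiv_def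
    proof (intro exI[of _ \<delta>] allI)
      fix x
      have eq: "(q \<circ> f) x - - q (x + \<delta>) = (Q (f x) - (- Q (x + \<delta>) + k)) + (of_int \<sigma> / 4 - (2 * \<theta> - k))"
        unfolding q_def c_def by (simp add: algebra_simps)
      have "Q (f x) - (- Q (x + \<delta>) + k) \<in> \<int>" using Qf[of x] unfolding qz_eq_def .
      thus "qz_eq ((q \<circ> f) x) (- q (x + \<delta>))" unfolding qz_eq_def eq
        by (rule Ints_add[OF _ Ints_diff[OF sig \<theta>(2)]])
    qed
  qed
  show ?thesis
  proof (intro exI[of _ q] conjI allI impI Tq)
    show "tau1 q / complex_of_real (cmod (tau1 q)) = exp (2 * pi * \<i> * of_int \<sigma> / 8)"
      using phase_q target by simp
  next
    fix q' assume q': "T_refinement b q' \<and>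
      tau1 q' / complex_of_real (cmod (tau1 q')) = exp (2 * pi * \<i> * of_int \<sigma> / 8)"
    have qr': "qz_eq (q' (x + y) - q' x - q' y + q' 0) (b x y)" for x y
      using q' unfolding T_refinement_def quad_refinement_def by blast
    define P where "P x = q' x - q' 0 - Q x" for x
    have Phom: "P (x + y) - P x - P y \<in> \<int>" for x y
    proof -
      have eq: "P (x + y) - P x - P y = (q' (x + y) - q' x - q' y + q' 0 - b x y) - (Q (x + y) - Q x - Q y - b x y)"
        unfolding P_def by (simp add: algebra_simps)
      show ?thesis unfolding eq using qr'[of x y] unfolding qz_eq_def by (rule Ints_diff[OF _ hom])
    qed
    obtain \<delta>' where \<delta>': "\<And>x. P x - b x \<delta>' \<in> \<int>" using dual[OF Phom] by blast
    define d where "d = q' 0 - Q \<delta>'"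
    have q'Q: "q' x - (Q (x + \<delta>') + d) \<in> \<int>" for x
    proof -
      have eq: "q' x - (Q (x + \<delta>') + d) = (P x - b x \<delta>') - (Q (x + \<delta>') - Q x - Q \<delta>' - b x \<delta>')"
        unfolding P_def d_def by (simp add: algebra_simps)
      show ?thesis unfolding eq by (rule Ints_diff[OF \<delta>' hom])
    qed
    have "tau1 q' = (\<Sum>x\<in>UNIV. ee (Q (x + \<delta>')) * ee d)" unfolding tau1_ee
      by (rule sum.cong[OF refl]) (simp add: ee_add[symmetric] qz_ee qz_eq_def q'Q)
    also have "\<dots> = ee d * (\<Sum>x\<in>UNIV. ee (Q (x + \<delta>')))" by (simp add: sum_distrib_left mult.commute)
    also have "(\<Sum>x\<in>UNIV. ee (Q (x + \<delta>'))) = T" unfolding T_def by (rule sum_bij_reindex[OF bij_plus])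
    finally have tq': "tau1 q' = ee d * T" .
    have "ee d * u = ee c * u"
      using q' target unfolding tq' norm_ee_T u_def by simp
    hence "ee d = ee c" using unz by simp
    hence "ee (d - c) * ee c = 1 * ee c" by (simp add: ee_add[symmetric])
    hence "ee (d - c) = 1" by simp
    hence dc: "d - c \<in> \<int>" by (rule ee_eq1)
    show "qr_equiv q' q"
      unfolding qr_equiv_def
    proof (intro exI[of _ \<delta>'] allI)
      fix x
      have eq: "q' x - q (x + \<delta>') = (q' x - (Q (x + \<delta>') + d)) + (d - c)" unfolding q_def by simp
      show "qz_eq (q' x) (q (x + \<delta>'))" unfolding qz_eq_def eq by (rule Ints_add[OF q'Q dc])
    qed
  qed
qed


end
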